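(* Let $k\ge 2$ be an integer. Let $M$ be an $n\times n$ matrix with entries in $\{0,\pm1,\pm2,\dots,\pm\lfloor k/2\rfloor\}$ satisfying $M^T=-M$ and $MM^T=mI$, where $m\equiv -1\pmod k$. Let $C_k(M)$ be the $\mathbb{Z}_k$-code of length $2n$ with generator matrix $(I\ \ M)$, entries read modulo $k$. Let $a,b,c,d$ be integers with $a\equiv d\pmod k$ and $b\equiv c\pmod k$. Then $C_k(M)$ is a self-dual $\mathbb{Z}_k$-code, $A_k(C_k(M))$ is a unimodular lattice, and the $2n$ rows of the matrix \[ F(M)=\frac{1}{\sqrt{k}}\begin{pmatrix} aI+bM & cI+dM\\ -cI+dM & aI-bM\end{pmatrix} \] form a $\frac{1}{k}(a^2+mb^2+c^2+md^2)$-frame of $A_k(C_k(M))$.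
   Context: A $\mathbb{Z}_k$-code of length $N$ is a $\mathbb{Z}_k$-submodule of $\mathbb{Z}_k^N$; it is self-dual if it equals its dual under the standard inner product. Construction A: with $\rho:\mathbb{Z}_k\to\mathbb{Z}$ sending $0,1,\dots,k-1$ to $0,1,\dots,k-1$, for a $\mathbb{Z}_k$-code $C$ of length $N$ set $A_k(C)=\frac{1}{\sqrt{k}}\{\rho(C)+k\mathbb{Z}^N\}$. A lattice $L$ is unimodular if $L=L^*$ where $L^*=\{x:(x,y)\in\mathbb{Z}\ \forall y\in L\}$. For a lattice $L$ in dimension $N$, a set $\{f_1,\dots,f_N\}$ of vectors of $L$ with $(f_i,f_j)=t\,\delta_{i,j}$ is called a $t$-frame of $L$. *)

theory Defs
  imports Complex_Main
begin

text \<open>Vectors of length N are modelled as functions on nat that vanish at indices \<ge> N.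
  Elements of Z_k are represented by their residues 0,...,k-1 (so rho is the identity).\<close>

definition zk_space :: "int \<Rightarrow> nat \<Rightarrow> (nat \<Rightarrow> int) set" where
  "zk_space k N = {x. (\<forall>i<N. 0 \<le> x i \<and> x i < k) \<and> (\<forall>i\<ge>N. x i = 0)}"

definition zk_code :: "int \<Rightarrow> nat \<Rightarrow> (nat \<Rightarrow> int) set \<Rightarrow> bool" where
  "zk_code k N C \<longleftrightarrow> C \<subseteq> zk_space k N \<and> (\<lambda>_. 0) \<in> C
     \<and> (\<forall>x\<in>C. \<forall>y\<in>C. (\<lambda>i. (x i + y i) mod k) \<in> C)
     \<and> (\<forall>a x. x \<in> C \<longrightarrow> (\<lambda>i. (a * x i) mod k) \<in> C)"

definition zk_dual :: "int \<Rightarrow> nat \<Rightarrow> (nat \<Rightarrow> int) set \<Rightarrow> (nat \<Rightarrow> int) set" where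
  "zk_dual k N C = {x \<in> zk_space k N. \<forall>y\<in>C. (\<Sum>i<N. x i * y i) mod k = 0}"

definition self_dual_code :: "int \<Rightarrow> nat \<Rightarrow> (nat \<Rightarrow> int) set \<Rightarrow> bool" where
  "self_dual_code k N C \<longleftrightarrow> zk_code k N C \<and> C = zk_dual k N C"

definition code_gen :: "int \<Rightarrow> nat \<Rightarrow> nat \<Rightarrow> (nat \<Rightarrow> nat \<Rightarrow> int) \<Rightarrow> (nat \<Rightarrow> int) set" where
  "code_gen k n N G = {(\<lambda>j. if j < N then (\<Sum>r<n. u r * G r j) mod k else 0) | u. True}"

definition C_k :: "int \<Rightarrow> nat \<Rightarrow> (nat \<Rightarrow> nat \<Rightarrow> int) \<Rightarrow> (nat \<Rightarrow> int) set" where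
  "C_k k n M = code_gen k n (2*n)
      (\<lambda>r j. if j < n then (if j = r then 1 else 0) else M r (j - n))"

definition constrA :: "int \<Rightarrow> nat \<Rightarrow> (nat \<Rightarrow> int) set \<Rightarrow> (nat \<Rightarrow> real) set" where
  "constrA k N C = {x. \<exists>c\<in>C. \<exists>z::nat \<Rightarrow> int. (\<forall>i\<ge>N. z i = 0) \<and>
      x = (\<lambda>i. (of_int (c i) + of_int k * of_int (z i)) / sqrt (of_int k))}"

definition vinner :: "nat \<Rightarrow> (nat \<Rightarrow> real) \<Rightarrow> (nat \<Rightarrow> real) \<Rightarrow> real" where
  "vinner N x y = (\<Sum>i<N. x i * y i)"

definition lattice_dual :: "nat \<Rightarrow> (nat \<Rightarrow> real) set \<Rightarrow> (nat \<Rightarrow> real) set" where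
  "lattice_dual N L = {x. (\<forall>i\<ge>N. x i = 0) \<and> (\<forall>y\<in>L. vinner N x y \<in> \<int>)}"

definition unimodular :: "nat \<Rightarrow> (nat \<Rightarrow> real) set \<Rightarrow> bool" where
  "unimodular N L \<longleftrightarrow> L = lattice_dual N L"

definition is_frame :: "nat \<Rightarrow> (nat \<Rightarrow> real) set \<Rightarrow> real \<Rightarrow> (nat \<Rightarrow> nat \<Rightarrow> real) \<Rightarrow> bool" where
  "is_frame N L t f \<longleftrightarrow> (\<forall>i<N. f i \<in> L) \<and>
      (\<forall>i<N. \<forall>j<N. vinner N (f i) (f j) = (if i = j then t else 0))"

definition F_mat :: "int \<Rightarrow> nat \<Rightarrow> (nat \<Rightarrow> nat \<Rightarrow> int) \<Rightarrow> int \<Rightarrow> int \<Rightarrow> int \<Rightarrow> int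
    \<Rightarrow> nat \<Rightarrow> nat \<Rightarrow> real" where
  "F_mat k n M a b c d i j =
     (let dl = (\<lambda>p q. if p = q then 1 else 0 :: int);
          e = (if i < n \<and> j < n then a * dl i j + b * M i j
               else if i < n \<and> n \<le> j \<and> j < 2*n then c * dl i (j-n) + d * M i (j-n)
               else if n \<le> i \<and> i < 2*n \<and> j < n then - c * dl (i-n) j + d * M (i-n) j
               else if n \<le> i \<and> i < 2*n \<and> n \<le> j \<and> j < 2*n
                    then a * dl (i-n) (j-n) - b * M (i-n) (j-n)
               else 0)
      in of_int e / sqrt (of_int k))"

end

theory Submission imports Defs "HOL-Number_Theory.Cong" begin
lemma sum_split2: "(\<Sum>i<2*(n::nat). f i) = (\<Sum>i<n. f i) + (\<Sum>i<n. f (n+i))"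
proof -
  have "(\<Sum>i<2*n. f i) = sum f {0..<n+n}" by (simp add: lessThan_atLeast0 mult_2)
  also have "\<dots> = sum f {0..<n} + sum f {n..<n+n}" by (rule sum.atLeastLessThan_concat[symmetric]) auto
  also have "sum f {n..<n+n} = (\<Sum>i<n. f (n+i))"
    using sum.shift_bounds_nat_ivl[of f 0 n n] by (simp add: lessThan_atLeast0 add.commute)
  finally show ?thesis by (simp add: lessThan_atLeast0)
qed
lemma delta_sum: "i < (n::nat) \<Longrightarrow> (\<Sum>l<n. (if i = l then 1 else 0) * (f l::int)) = f i"
proof -
  assume "i < n"
  have "(\<Sum>l<n. (if i = l then 1 else 0) * f l) = (\<Sum>l<n. if i = l then f l else 0)"
    by (rule sum.cong) auto
  then show ?thesis using \<open>i < n\<close> by simp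
qed
lemma delta_sum2: "i < (n::nat) \<Longrightarrow> (\<Sum>l<n. (f l::int) * (if i = l then 1 else 0)) = f i"
proof -
  assume "i < n"
  have "(\<Sum>l<n. f l * (if i = l then 1 else 0)) = (\<Sum>l<n. if i = l then f l else 0)"
    by (rule sum.cong) auto
  then show ?thesis using \<open>i < n\<close> by simp
qed
locale P36 =
  fixes k m :: int and n :: nat and M :: "nat \<Rightarrow> nat \<Rightarrow> int"
  assumes k2: "k \<ge> 2"
    and anti: "\<forall>i<n. \<forall>j<n. M j i = - M i j"
    and orth: "\<forall>i<n. \<forall>j<n. (\<Sum>l<n. M i l * M j l) = (if i = j then m else 0)"
    and mk: "m mod k = (-1) mod k"
begin

definition vm :: "(nat \<Rightarrow> int) \<Rightarrow> nat \<Rightarrow> int" where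
  "vm u j = (\<Sum>r<n. u r * M r j)"

definition cw :: "(nat \<Rightarrow> int) \<Rightarrow> nat \<Rightarrow> int" where
  "cw u = (\<lambda>j. if j < 2*n then (\<Sum>r<n. u r * (if j < n then (if j = r then 1 else 0) else M r (j - n))) mod k else 0)"

lemma Ck_eq: "C_k k n M = range cw"
  unfolding C_k_def code_gen_def cw_def by auto

lemma cw_lo: "i < n \<Longrightarrow> cw u i = u i mod k"
  unfolding cw_def by (simp add: delta_sum2)

lemma cw_hi: "j < n \<Longrightarrow> cw u (n+j) = vm u j mod k"
  unfolding cw_def vm_def by simp

lemma cw_out: "2*n \<le> j \<Longrightarrow> cw u j = 0"
  unfolding cw_def by simp

lemma cw_range: "0 \<le> cw u j \<and> cw u j < k"
  using k2 unfolding cw_def by auto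

lemma antiI: "i < n \<Longrightarrow> j < n \<Longrightarrow> M j i = - M i j"
  using anti by blast

lemma orthI: "i < n \<Longrightarrow> j < n \<Longrightarrow> (\<Sum>l<n. M i l * M j l) = (if i = j then m else 0)"
  using orth by blast

lemma M_diag: "i < n \<Longrightarrow> M i i = 0"
  using antiI[of i i] by simp

lemma mcong: "[m = -1] (mod k)"
  using mk by (simp add: cong_def)

lemma mdvd: "k dvd (m + 1)"
  using mcong by (simp add: cong_iff_dvd_diff)

lemma mcong1: "[1 + m = 0] (mod k)"
  using mdvd by (simp add: cong_0_iff add.commute)

lemma mcong2: "[- m = 1] (mod k)"
proof -
  have e: "- m - 1 = - (m + 1)" by simp
  have "k dvd - (m + 1)" using mdvd by (simp only: dvd_minus_iff)
  then show ?thesis unfolding cong_iff_dvd_diff e .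
qed

lemma vm_vm: "j < n \<Longrightarrow> vm (vm u) j = - m * u j"
proof -
  assume j: "j < n"
  have "vm (vm u) j = (\<Sum>r<n. \<Sum>s<n. u s * (M s r * M r j))"
    unfolding vm_def by (simp add: sum_distrib_right mult.assoc)
  also have "\<dots> = (\<Sum>s<n. \<Sum>r<n. u s * (M s r * M r j))"
    by (rule sum.swap)
  also have "\<dots> = (\<Sum>s<n. u s * (\<Sum>r<n. M s r * M r j))"
    by (simp add: sum_distrib_left)
  also have "\<dots> = (\<Sum>s<n. u s * (- (if s = j then m else 0)))"
  proof (rule sum.cong)
    fix s assume s: "s \<in> {..<n}"
    have "(\<Sum>r<n. M s r * M r j) = (\<Sum>r<n. - (M s r * M j r))"
      by (rule sum.cong) (use antiI[OF j] in auto)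
    also have "\<dots> = - (if s = j then m else 0)"
      using orthI[of s j] s j by (simp add: sum_negf)
    finally show "u s * (\<Sum>r<n. M s r * M r j) = u s * (- (if s = j then m else 0))" by simp
  qed simp
  also have "\<dots> = (\<Sum>s<n. if s = j then - m * u j else 0)"
    by (rule sum.cong) auto
  also have "\<dots> = - m * u j"
    using j by simp
  finally show ?thesis .
qed

lemma vm_inner: "(\<Sum>j<n. vm u j * vm v j) = m * (\<Sum>r<n. u r * v r)"
proof -
  have "(\<Sum>j<n. vm u j * vm v j) = (\<Sum>j<n. \<Sum>r<n. \<Sum>s<n. u r * v s * (M r j * M s j))"
    unfolding vm_def by (simp add: sum_product algebra_simps)
  also have "\<dots> = (\<Sum>r<n. \<Sum>j<n. \<Sum>s<n. u r * v s * (M r j * M s j))"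
    by (rule sum.swap)
  also have "\<dots> = (\<Sum>r<n. \<Sum>s<n. \<Sum>j<n. u r * v s * (M r j * M s j))"
    by (rule sum.cong[OF refl], rule sum.swap)
  also have "\<dots> = (\<Sum>r<n. \<Sum>s<n. u r * v s * (if r = s then m else 0))"
    by (intro sum.cong refl) (simp add: sum_distrib_left[symmetric] orthI)
  also have "\<dots> = (\<Sum>r<n. u r * v r * m)"
  proof (rule sum.cong[OF refl])
    fix r assume r: "r \<in> {..<n}"
    show "(\<Sum>s<n. u r * v s * (if r = s then m else 0)) = u r * v r * m"
      using delta_sum[of r n "\<lambda>s. u r * v s * m"] r by (simp add: algebra_simps if_distrib cong: if_cong)
  qed
  also have "\<dots> = m * (\<Sum>r<n. u r * v r)"
    by (simp add: sum_distrib_left algebra_simps)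
  finally show ?thesis .
qed

lemma vm_transp: "(\<Sum>j<n. x j * vm u j) = - (\<Sum>r<n. u r * vm x r)"
proof -
  have "(\<Sum>j<n. x j * vm u j) = (\<Sum>j<n. \<Sum>r<n. u r * (x j * M r j))"
    unfolding vm_def by (simp add: sum_distrib_left algebra_simps)
  also have "\<dots> = (\<Sum>r<n. \<Sum>j<n. u r * (x j * M r j))"
    by (rule sum.swap)
  also have "\<dots> = (\<Sum>r<n. - (u r * vm x r))"
  proof (rule sum.cong[OF refl])
    fix r assume r: "r \<in> {..<n}"
    have "(\<Sum>j<n. u r * (x j * M r j)) = (\<Sum>j<n. - (u r * (x j * M j r)))"
      by (rule sum.cong) (use antiI[of _ r] r in auto)
    then show "(\<Sum>j<n. u r * (x j * M r j)) = - (u r * vm x r)"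
      unfolding vm_def by (simp add: sum_negf sum_distrib_left)
  qed
  finally show ?thesis by (simp add: sum_negf)
qed

lemma ip_cw: "[(\<Sum>i<2*n. x i * cw u i) = (\<Sum>i<n. x i * u i) + (\<Sum>j<n. x (n+j) * vm u j)] (mod k)"
proof -
  have "(\<Sum>i<2*n. x i * cw u i) = (\<Sum>i<n. x i * (u i mod k)) + (\<Sum>j<n. x (n+j) * (vm u j mod k))"
    unfolding sum_split2 by (intro arg_cong2[where f="(+)"] sum.cong) (auto simp: cw_lo cw_hi)
  moreover have "[(\<Sum>i<n. x i * (u i mod k)) + (\<Sum>j<n. x (n+j) * (vm u j mod k))
      = (\<Sum>i<n. x i * u i) + (\<Sum>j<n. x (n+j) * vm u j)] (mod k)"
    by (intro cong_add cong_sum cong_mult cong_refl) simp_all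
  ultimately show ?thesis by simp
qed

lemma code: "zk_code k (2*n) (range cw)"
  unfolding zk_code_def
proof (intro conjI ballI allI impI)
  show "range cw \<subseteq> zk_space k (2*n)"
    using cw_range cw_out by (auto simp: zk_space_def)
  show "(\<lambda>_. 0) \<in> range cw"
    by (rule range_eqI[of _ _ "\<lambda>_. 0"]) (auto simp: cw_def fun_eq_iff)
  fix x y assume "x \<in> range cw" "y \<in> range cw"
  then obtain u v where xy: "x = cw u" "y = cw v" by auto
  show "(\<lambda>i. (x i + y i) mod k) \<in> range cw"
    by (rule range_eqI[of _ _ "\<lambda>r. u r + v r"])
       (auto simp: xy cw_def fun_eq_iff mod_add_eq distrib_right sum.distrib)
next
  fix a x assume "x \<in> range cw"
  then obtain u where xy: "x = cw u" by auto
  show "(\<lambda>i. (a * x i) mod k) \<in> range cw"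
    by (rule range_eqI[of _ _ "\<lambda>r. a * u r"])
       (auto simp: xy cw_def fun_eq_iff mod_mult_right_eq sum_distrib_left mult.assoc)
qed

lemma cw_in_dual: "cw u \<in> zk_dual k (2*n) (range cw)"
proof -
  have "(\<Sum>i<2*n. cw u i * cw v i) mod k = 0" for v
  proof -
    have "[(\<Sum>i<2*n. cw u i * cw v i) = (\<Sum>i<n. cw u i * v i) + (\<Sum>j<n. cw u (n+j) * vm v j)] (mod k)"
      by (rule ip_cw)
    also have "[(\<Sum>i<n. cw u i * v i) + (\<Sum>j<n. cw u (n+j) * vm v j)
        = (\<Sum>i<n. u i * v i) + (\<Sum>j<n. vm u j * vm v j)] (mod k)"
      by (intro cong_add cong_sum cong_mult cong_refl) (simp_all add: cw_lo cw_hi)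
    also have "(\<Sum>i<n. u i * v i) + (\<Sum>j<n. vm u j * vm v j) = (1 + m) * (\<Sum>i<n. u i * v i)"
      by (simp add: vm_inner algebra_simps)
    also have "[(1 + m) * (\<Sum>i<n. u i * v i) = 0 * (\<Sum>i<n. u i * v i)] (mod k)"
      using mcong1 by (intro cong_mult cong_refl)
    finally show ?thesis by (simp add: cong_def)
  qed
  then show ?thesis
    using cw_range cw_out by (auto simp: zk_dual_def zk_space_def)
qed

lemma dual_in_code: assumes x: "x \<in> zk_dual k (2*n) (range cw)" shows "x \<in> range cw"
proof -
  from x have sp: "\<And>i. i < 2*n \<Longrightarrow> 0 \<le> x i \<and> x i < k" "\<And>i. 2*n \<le> i \<Longrightarrow> x i = 0"
    and orth0: "\<And>u. (\<Sum>i<2*n. x i * cw u i) mod k = 0"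
    by (auto simp: zk_dual_def zk_space_def)
  define x2 where "x2 = (\<lambda>j. x (n+j))"
  have low: "[x r = vm x2 r] (mod k)" if r: "r < n" for r
  proof -
    define u where "u = (\<lambda>s. if r = s then 1 else (0::int))"
    have "[0 = (\<Sum>i<2*n. x i * cw u i)] (mod k)"
      using orth0[of u] by (simp add: cong_def)
    also have "[(\<Sum>i<2*n. x i * cw u i) = (\<Sum>i<n. x i * u i) + (\<Sum>j<n. x2 j * vm u j)] (mod k)"
      unfolding x2_def by (rule ip_cw)
    also have "(\<Sum>i<n. x i * u i) + (\<Sum>j<n. x2 j * vm u j) = x r - vm x2 r"
    proof -
      have "(\<Sum>i<n. x i * u i) = x r" unfolding u_def by (rule delta_sum2[OF r])
      moreover have "(\<Sum>s<n. u s * vm x2 s) = vm x2 r"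
        unfolding u_def by (rule delta_sum[OF r])
      ultimately show ?thesis unfolding vm_transp[of x2 u] by simp
    qed
    finally have "[x r - vm x2 r = 0] (mod k)" by (rule cong_sym)
    then show ?thesis by (simp add: cong_iff_dvd_diff)
  qed
  have "x = cw x"
  proof
    fix j
    show "x j = cw x j"
    proof (cases "j < n")
      case True then show ?thesis using sp(1)[of j] by (simp add: cw_lo)
    next
      case False
      show ?thesis
      proof (cases "j < 2*n")
        case True
        define j' where "j' = j - n"
        have j': "j = n + j'" "j' < n" using False True by (auto simp: j'_def)
        have "[vm x j' = vm (vm x2) j'] (mod k)"
          unfolding vm_def[of x] vm_def[of "vm x2"] by (intro cong_sum cong_mult cong_refl low) simp
        also have "vm (vm x2) j' = - m * x2 j'" by (rule vm_vm[OF j'(2)])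
        also have "[- m * x2 j' = 1 * x2 j'] (mod k)"
          using mcong2 by (intro cong_mult cong_refl)
        finally have "vm x j' mod k = x j mod k" by (simp add: cong_def j' x2_def)
        also have "x j mod k = x j" using sp(1)[of j] True by simp
        finally show ?thesis by (simp add: j' cw_hi)
      next
        case False then show ?thesis using sp(2)[of j] cw_out[of j] by simp
      qed
    qed
  qed
  then show ?thesis by blast
qed

lemma self_dual: "self_dual_code k (2*n) (range cw)"
  unfolding self_dual_code_def using code cw_in_dual dual_in_code by blast

lemma cw0: "cw (\<lambda>_. 0) = (\<lambda>_. 0)"
  by (auto simp: cw_def fun_eq_iff)

abbreviation sk :: real where "sk \<equiv> sqrt (of_int k)"

lemma kpos: "k > 0" using k2 by simp

lemma sk_pos: "sk > 0" using kpos by simp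

lemma sk_sq: "sk * sk = of_int k" using kpos by simp

lemma vinner_int:
  "vinner N (\<lambda>i. of_int (A i) / sk) (\<lambda>i. of_int (B i) / sk) = of_int (\<Sum>i<N. A i * B i) / of_int k"
proof -
  have h: "(of_int (A i) / sk) * (of_int (B i) / sk) = of_int (A i * B i) / of_int k" for i
    by (simp only: times_divide_times_eq sk_sq of_int_mult)
  show ?thesis unfolding vinner_def h of_int_sum sum_divide_distrib ..
qed

lemma int_div_Ints: "(real_of_int S / real_of_int k \<in> \<int>) \<longleftrightarrow> k dvd S"
proof
  assume "real_of_int S / real_of_int k \<in> \<int>"
  then obtain q where q: "real_of_int S / real_of_int k = of_int q" by (auto elim: Ints_cases)
  then have "real_of_int S = of_int k * of_int q" using kpos by (simp add: field_simps)
  then have "S = k * q" by (metis of_int_eq_iff of_int_mult)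
  then show "k dvd S" by simp
next
  assume "k dvd S"
  then obtain q where "S = k * q" by auto
  then show "real_of_int S / real_of_int k \<in> \<int>" using kpos by simp
qed

lemma constrA_alt: "constrA k (2*n) (range cw) =
   {x. \<exists>u. \<exists>z::nat \<Rightarrow> int. (\<forall>i\<ge>2*n. z i = 0) \<and> x = (\<lambda>i. of_int (cw u i + k * z i) / sk)}"
  unfolding constrA_def by auto

lemma mem_L:
  assumes "\<And>j. [E j = cw u j] (mod k)" "\<And>j. 2*n \<le> j \<Longrightarrow> E j = 0"
  shows "(\<lambda>j. of_int (E j) / sk) \<in> constrA k (2*n) (range cw)"
proof -
  define z where "z j = (E j - cw u j) div k" for j
  have "E j = cw u j + k * z j" for j
  proof -
    have "k dvd (E j - cw u j)" using assms(1)[of j] by (simp add: cong_iff_dvd_diff)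
    then show ?thesis unfolding z_def by simp
  qed
  moreover have "\<forall>i\<ge>2*n. z i = 0" using assms(2) cw_out by (simp add: z_def)
  ultimately show ?thesis unfolding constrA_alt by (intro CollectI exI[of _ u] exI[of _ z]) auto
qed

lemma L_sub: "constrA k (2*n) (range cw) \<subseteq> lattice_dual (2*n) (constrA k (2*n) (range cw))"
proof
  fix x assume "x \<in> constrA k (2*n) (range cw)"
  then obtain u z where z: "\<forall>i\<ge>2*n. z i = 0" and x: "x = (\<lambda>i. of_int (cw u i + k * z i) / sk)"
    unfolding constrA_alt by auto
  have "vinner (2*n) x y \<in> \<int>" if "y \<in> constrA k (2*n) (range cw)" for y
  proof -
    from that obtain v w where y: "y = (\<lambda>i. of_int (cw v i + k * w i) / sk)"
      unfolding constrA_alt by auto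
    have "[(\<Sum>i<2*n. (cw u i + k * z i) * (cw v i + k * w i)) = (\<Sum>i<2*n. cw u i * cw v i)] (mod k)"
      by (intro cong_sum cong_mult) (simp_all add: cong_def)
    moreover have "(\<Sum>i<2*n. cw u i * cw v i) mod k = 0"
      using cw_in_dual[of u] by (auto simp: zk_dual_def)
    ultimately have "k dvd (\<Sum>i<2*n. (cw u i + k * z i) * (cw v i + k * w i))"
      by (simp add: cong_def mod_eq_0_iff_dvd)
    then show ?thesis unfolding x y vinner_int int_div_Ints .
  qed
  moreover have "\<forall>i\<ge>2*n. x i = 0" using z cw_out by (simp add: x)
  ultimately show "x \<in> lattice_dual (2*n) (constrA k (2*n) (range cw))"
    unfolding lattice_dual_def by blast
qed

lemma L_sup: "lattice_dual (2*n) (constrA k (2*n) (range cw)) \<subseteq> constrA k (2*n) (range cw)"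
proof
  fix x assume "x \<in> lattice_dual (2*n) (constrA k (2*n) (range cw))"
  then have supp: "\<And>i. 2*n \<le> i \<Longrightarrow> x i = 0"
    and dl: "\<And>y. y \<in> constrA k (2*n) (range cw) \<Longrightarrow> vinner (2*n) x y \<in> \<int>"
    unfolding lattice_dual_def by auto
  define w where "w i = \<lfloor>x i * sk\<rfloor>" for i
  have xw: "x i = of_int (w i) / sk" for i
  proof (cases "i < 2*n")
    case True
    define e where "e = (\<lambda>j. if j = i then k else 0::int)"
    have "(\<lambda>j. of_int (e j) / sk) \<in> constrA k (2*n) (range cw)"
      by (rule mem_L[of _ "\<lambda>_. 0"]) (use True in \<open>auto simp: e_def cw0 cong_def\<close>)
    then have "vinner (2*n) x (\<lambda>j. of_int (e j) / sk) \<in> \<int>" by (rule dl)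
    moreover have "vinner (2*n) x (\<lambda>j. of_int (e j) / sk) = x i * sk"
    proof -
      have "vinner (2*n) x (\<lambda>j. of_int (e j) / sk) = (\<Sum>j<2*n. if j = i then x i * (of_int k / sk) else 0)"
        unfolding vinner_def e_def by (rule sum.cong) auto
      also have "\<dots> = x i * (of_int k / sk)" using True by simp
      also have "of_int k / sk = sk" using sk_sq sk_pos by (simp add: field_simps)
      finally show ?thesis .
    qed
    ultimately have "x i * sk \<in> \<int>" by simp
    then have "of_int (w i) = x i * sk" unfolding w_def by (metis Ints_cases floor_of_int)
    then show ?thesis using sk_pos by (simp add: field_simps)
  next
    case False then show ?thesis using supp[of i] by (simp add: w_def)
  qed
  have wout: "w i = 0" if "2*n \<le> i" for i using supp[OF that] by (simp add: w_def)
  define c where "c i = w i mod k" for i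
  define z where "z i = w i div k" for i
  have c_dual: "c \<in> zk_dual k (2*n) (range cw)"
  proof -
    have "(\<Sum>i<2*n. c i * cw u i) mod k = 0" for u
    proof -
      have "(\<lambda>j. of_int (cw u j) / sk) \<in> constrA k (2*n) (range cw)"
        by (rule mem_L[of _ u]) (simp_all add: cw_out)
      then have "vinner (2*n) x (\<lambda>j. of_int (cw u j) / sk) \<in> \<int>" by (rule dl)
      then have "k dvd (\<Sum>i<2*n. w i * cw u i)"
        unfolding xw[abs_def] vinner_int int_div_Ints .
      moreover have "[(\<Sum>i<2*n. c i * cw u i) = (\<Sum>i<2*n. w i * cw u i)] (mod k)"
        unfolding c_def by (intro cong_sum cong_mult) (simp_all add: cong_def)
      ultimately show ?thesis by (simp add: cong_def mod_eq_0_iff_dvd)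
    qed
    moreover have "\<forall>i<2*n. 0 \<le> c i \<and> c i < k" using kpos by (simp add: c_def)
    moreover have "\<forall>i\<ge>2*n. c i = 0" using wout by (simp add: c_def)
    ultimately show ?thesis by (auto simp: zk_dual_def zk_space_def)
  qed
  then obtain u where u: "c = cw u" using dual_in_code by blast
  have "x = (\<lambda>i. of_int (cw u i + k * z i) / sk)"
  proof
    fix i
    have "w i = c i + k * z i" unfolding c_def z_def by simp
    then show "x i = of_int (cw u i + k * z i) / sk" by (simp add: xw u)
  qed
  moreover have "\<forall>i\<ge>2*n. z i = 0" using wout by (simp add: z_def)
  ultimately show "x \<in> constrA k (2*n) (range cw)" unfolding constrA_alt by blast
qed

lemma unimod: "unimodular (2*n) (constrA k (2*n) (range cw))"
  unfolding unimodular_def using L_sub L_sup by blast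

lemma MM: "i < n \<Longrightarrow> j < n \<Longrightarrow> (\<Sum>r<n. M i r * M r j) = - (if i = j then m else 0)"
proof -
  assume i: "i < n" and j: "j < n"
  have "(\<Sum>r<n. M i r * M r j) = (\<Sum>r<n. - (M i r * M j r))"
    by (rule sum.cong) (use antiI[OF j] in auto)
  also have "\<dots> = - (if i = j then m else 0)"
    using orthI[OF i j] by (simp add: sum_negf)
  finally show ?thesis .
qed

lemma vm_row: "i < n \<Longrightarrow> j < n \<Longrightarrow>
   vm (\<lambda>r. \<alpha> * (if i = r then 1 else 0) + \<beta> * M i r) j = \<alpha> * M i j - \<beta> * (if i = j then m else 0)"
proof -
  assume i: "i < n" and j: "j < n"
  have "vm (\<lambda>r. \<alpha> * (if i = r then 1 else 0) + \<beta> * M i r) j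
     = \<alpha> * (\<Sum>r<n. (if i = r then 1 else 0) * M r j) + \<beta> * (\<Sum>r<n. M i r * M r j)"
    unfolding vm_def by (simp add: sum_distrib_left sum.distrib algebra_simps)
  also have "\<dots> = \<alpha> * M i j - \<beta> * (if i = j then m else 0)"
    by (simp only: delta_sum[OF i] MM[OF i j])
  finally show ?thesis .
qed

lemma rowprod: "i < n \<Longrightarrow> j < n \<Longrightarrow>
  (\<Sum>l<n. (\<alpha> * (if i = l then 1 else 0) + \<beta> * M i l) * (\<gamma> * (if j = l then 1 else 0) + \<delta> * M j l))
  = \<alpha> * \<gamma> * (if j = i then 1 else 0) + \<alpha> * \<delta> * M j i + \<beta> * \<gamma> * M i j + \<beta> * \<delta> * (if i = j then m else 0)"
proof -
  assume i: "i < n" and j: "j < n"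
  have "(\<Sum>l<n. (\<alpha> * (if i = l then 1 else 0) + \<beta> * M i l) * (\<gamma> * (if j = l then 1 else 0) + \<delta> * M j l))
    = (\<Sum>l<n. \<alpha> * \<gamma> * ((if i = l then 1 else 0) * (if j = l then 1 else 0)) + \<alpha> * \<delta> * ((if i = l then 1 else 0) * M j l)
          + \<beta> * \<gamma> * (M i l * (if j = l then 1 else 0)) + \<beta> * \<delta> * (M i l * M j l))"
    by (rule sum.cong[OF refl]) (simp only: algebra_simps)
  also have "\<dots> = \<alpha> * \<gamma> * (\<Sum>l<n. (if i = l then 1 else 0) * (if j = l then 1 else 0)) + \<alpha> * \<delta> * (\<Sum>l<n. (if i = l then 1 else 0) * M j l)
          + \<beta> * \<gamma> * (\<Sum>l<n. M i l * (if j = l then 1 else 0)) + \<beta> * \<delta> * (\<Sum>l<n. M i l * M j l)"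
    by (simp only: sum.distrib sum_distrib_left)
  also have "\<dots> = \<alpha> * \<gamma> * (if j = i then 1 else 0) + \<alpha> * \<delta> * M j i + \<beta> * \<gamma> * M i j + \<beta> * \<delta> * (if i = j then m else 0)"
    by (simp only: delta_sum[OF i] delta_sum2[OF j] orthI[OF i j])
  finally show ?thesis .
qed

definition Ee :: "int \<Rightarrow> int \<Rightarrow> int \<Rightarrow> int \<Rightarrow> nat \<Rightarrow> nat \<Rightarrow> int" where
  "Ee a b c d i j =
     (let dl = (\<lambda>p q. if p = q then 1 else 0 :: int);
          e = (if i < n \<and> j < n then a * dl i j + b * M i j
               else if i < n \<and> n \<le> j \<and> j < 2*n then c * dl i (j-n) + d * M i (j-n)
               else if n \<le> i \<and> i < 2*n \<and> j < n then - c * dl (i-n) j + d * M (i-n) j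
               else if n \<le> i \<and> i < 2*n \<and> n \<le> j \<and> j < 2*n
                    then a * dl (i-n) (j-n) - b * M (i-n) (j-n)
               else 0)
      in e)"

lemma F_eq: "F_mat k n M a b c d i = (\<lambda>j. of_int (Ee a b c d i j) / sk)"
  unfolding F_mat_def Ee_def by (rule ext) (simp only: Let_def)

lemma Ee_tl: "i < n \<Longrightarrow> l < n \<Longrightarrow> Ee a b c d i l = a * (if i = l then 1 else 0) + b * M i l"
  by (simp add: Ee_def)
lemma Ee_tr: "i < n \<Longrightarrow> l < n \<Longrightarrow> Ee a b c d i (n+l) = c * (if i = l then 1 else 0) + d * M i l"
  by (simp add: Ee_def)
lemma Ee_bl: "i < n \<Longrightarrow> l < n \<Longrightarrow> Ee a b c d (n+i) l = (- c) * (if i = l then 1 else 0) + d * M i l"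
  by (simp add: Ee_def)
lemma Ee_br: "i < n \<Longrightarrow> l < n \<Longrightarrow> Ee a b c d (n+i) (n+l) = a * (if i = l then 1 else 0) + (- b) * M i l"
  by (simp add: Ee_def)
lemma Ee_out: "2*n \<le> l \<Longrightarrow> Ee a b c d i l = 0"
  by (simp add: Ee_def)

lemma split_idx: "i < 2*n \<Longrightarrow> i < n \<or> (\<exists>i'. i = n + i' \<and> i' < n)"
  by (cases "i < n") (auto intro!: exI[of _ "i - n"])

lemma row_in:
  assumes ad: "[a = d] (mod k)" and bc: "[b = c] (mod k)" and i: "i < 2*n"
  shows "F_mat k n M a b c d i \<in> constrA k (2*n) (range cw)"
proof -
  have "[- (b * m) = b] (mod k)" using cong_mult[OF cong_refl[of b] mcong2] by simp
  from this bc have bm: "[- (b * m) = c] (mod k)" by (rule cong_trans)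
  have "[- (d * m) = d] (mod k)" using cong_mult[OF cong_refl[of d] mcong2] by simp
  from this cong_sym[OF ad] have dm: "[- (d * m) = a] (mod k)" by (rule cong_trans)
  from split_idx[OF i] show ?thesis
  proof
    assume i: "i < n"
    define u where "u = (\<lambda>r. a * (if i = r then 1 else 0) + b * M i r)"
    show ?thesis unfolding F_eq
    proof (rule mem_L[of _ u])
      fix j
      show "[Ee a b c d i j = cw u j] (mod k)"
      proof (cases "j < 2*n")
        case True
        from split_idx[OF True] show ?thesis
        proof
          assume j: "j < n"
          show ?thesis using i j by (simp add: Ee_tl cw_lo u_def)
        next
          assume "\<exists>j'. j = n + j' \<and> j' < n"
          then obtain j' where j': "j = n + j'" "j' < n" by blast
          have "[c * (if i = j' then 1 else 0) + d * M i j' = a * M i j' - b * (if i = j' then m else 0)] (mod k)"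
          proof (cases "i = j'")
            case True then show ?thesis using M_diag[OF i] cong_sym[OF bm] by simp
          next
            case False then show ?thesis using cong_mult[OF cong_sym[OF ad] cong_refl[of "M i j'"]] by simp
          qed
          then show ?thesis
            unfolding j'(1) Ee_tr[OF i j'(2)] cw_hi[OF j'(2)] u_def vm_row[OF i j'(2)] cong_mod_right .
        qed
      next
        case False then show ?thesis by (simp add: Ee_out cw_out)
      qed
    qed (simp add: Ee_out)
  next
    assume "\<exists>i'. i = n + i' \<and> i' < n"
    then obtain i' where i': "i = n + i'" "i' < n" by blast
    define u where "u = (\<lambda>r. (- c) * (if i' = r then 1 else 0) + d * M i' r)"
    show ?thesis unfolding F_eq
    proof (rule mem_L[of _ u])
      fix j
      show "[Ee a b c d i j = cw u j] (mod k)"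
      proof (cases "j < 2*n")
        case True
        from split_idx[OF True] show ?thesis
        proof
          assume j: "j < n"
          show ?thesis using i' j by (simp add: Ee_bl cw_lo u_def)
        next
          assume "\<exists>j'. j = n + j' \<and> j' < n"
          then obtain j' where j': "j = n + j'" "j' < n" by blast
          have "[a * (if i' = j' then 1 else 0) + (- b) * M i' j' = (- c) * M i' j' - d * (if i' = j' then m else 0)] (mod k)"
          proof (cases "i' = j'")
            case True then show ?thesis using M_diag[OF i'(2)] cong_sym[OF dm] by simp
          next
            case False then show ?thesis
              using cong_mult[OF cong_refl[of "-1"] cong_mult[OF bc cong_refl[of "M i' j'"]]] by simp
          qed
          then show ?thesis
            unfolding i'(1) j'(1) Ee_br[OF i'(2) j'(2)] cw_hi[OF j'(2)] u_def vm_row[OF i'(2) j'(2)] cong_mod_right .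
        qed
      next
        case False then show ?thesis by (simp add: Ee_out cw_out)
      qed
    qed (simp add: Ee_out)
  qed
qed

lemma Ee_inner:
  assumes i: "i < 2*n" and j: "j < 2*n"
  shows "(\<Sum>l<2*n. Ee a b c d i l * Ee a b c d j l) = (if i = j then a^2 + m*b^2 + c^2 + m*d^2 else 0)"
proof -
  have gen: "\<And>i j \<alpha>1 \<beta>1 \<gamma>1 \<delta>1 \<alpha>2 \<beta>2 \<gamma>2 \<delta>2 I J. i < n \<Longrightarrow> j < n \<Longrightarrow>
      (\<And>l. l < n \<Longrightarrow> Ee a b c d I l = \<alpha>1 * (if i = l then 1 else 0) + \<beta>1 * M i l) \<Longrightarrow>
      (\<And>l. l < n \<Longrightarrow> Ee a b c d J l = \<gamma>1 * (if j = l then 1 else 0) + \<delta>1 * M j l) \<Longrightarrow>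
      (\<And>l. l < n \<Longrightarrow> Ee a b c d I (n+l) = \<alpha>2 * (if i = l then 1 else 0) + \<beta>2 * M i l) \<Longrightarrow>
      (\<And>l. l < n \<Longrightarrow> Ee a b c d J (n+l) = \<gamma>2 * (if j = l then 1 else 0) + \<delta>2 * M j l) \<Longrightarrow>
      (\<Sum>l<2*n. Ee a b c d I l * Ee a b c d J l) =
        (\<alpha>1 * \<gamma>1 * (if j = i then 1 else 0) + \<alpha>1 * \<delta>1 * M j i + \<beta>1 * \<gamma>1 * M i j + \<beta>1 * \<delta>1 * (if i = j then m else 0))
      + (\<alpha>2 * \<gamma>2 * (if j = i then 1 else 0) + \<alpha>2 * \<delta>2 * M j i + \<beta>2 * \<gamma>2 * M i j + \<beta>2 * \<delta>2 * (if i = j then m else 0))"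
  proof -
    fix i j \<alpha>1 \<beta>1 \<gamma>1 \<delta>1 \<alpha>2 \<beta>2 \<gamma>2 \<delta>2 I J
    assume i: "i < n" and j: "j < n"
      and h1: "\<And>l. l < n \<Longrightarrow> Ee a b c d I l = \<alpha>1 * (if i = l then 1 else 0) + \<beta>1 * M i l"
      and h2: "\<And>l. l < n \<Longrightarrow> Ee a b c d J l = \<gamma>1 * (if j = l then 1 else 0) + \<delta>1 * M j l"
      and h3: "\<And>l. l < n \<Longrightarrow> Ee a b c d I (n+l) = \<alpha>2 * (if i = l then 1 else 0) + \<beta>2 * M i l"
      and h4: "\<And>l. l < n \<Longrightarrow> Ee a b c d J (n+l) = \<gamma>2 * (if j = l then 1 else 0) + \<delta>2 * M j l"
    have "(\<Sum>l<2*n. Ee a b c d I l * Ee a b c d J l)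
       = (\<Sum>l<n. (\<alpha>1 * (if i = l then 1 else 0) + \<beta>1 * M i l) * (\<gamma>1 * (if j = l then 1 else 0) + \<delta>1 * M j l))
       + (\<Sum>l<n. (\<alpha>2 * (if i = l then 1 else 0) + \<beta>2 * M i l) * (\<gamma>2 * (if j = l then 1 else 0) + \<delta>2 * M j l))"
      unfolding sum_split2 by (intro arg_cong2[where f="(+)"] sum.cong refl) (simp_all only: lessThan_iff h1 h2 h3 h4)
    then show "(\<Sum>l<2*n. Ee a b c d I l * Ee a b c d J l) =
        (\<alpha>1 * \<gamma>1 * (if j = i then 1 else 0) + \<alpha>1 * \<delta>1 * M j i + \<beta>1 * \<gamma>1 * M i j + \<beta>1 * \<delta>1 * (if i = j then m else 0))
      + (\<alpha>2 * \<gamma>2 * (if j = i then 1 else 0) + \<alpha>2 * \<delta>2 * M j i + \<beta>2 * \<gamma>2 * M i j + \<beta>2 * \<delta>2 * (if i = j then m else 0))"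
      by (simp only: rowprod[OF i j])
  qed
  from split_idx[OF i] show ?thesis
  proof
    assume i: "i < n"
    from split_idx[OF j] show ?thesis
    proof
      assume j: "j < n"
      have e: "(\<Sum>l<2*n. Ee a b c d i l * Ee a b c d j l) =
        (a * a * (if j = i then 1 else 0) + a * b * M j i + b * a * M i j + b * b * (if i = j then m else 0))
      + (c * c * (if j = i then 1 else 0) + c * d * M j i + d * c * M i j + d * d * (if i = j then m else 0))"
        by (rule gen[OF i j]) (simp_all add: Ee_tl Ee_tr i j)
      show ?thesis unfolding e using antiI[OF i j] M_diag[OF i]
        by (cases "i = j") (simp_all add: algebra_simps power2_eq_square)
    next
      assume "\<exists>j'. j = n + j' \<and> j' < n"
      then obtain j' where j': "j = n + j'" "j' < n" by blast
      have e: "(\<Sum>l<2*n. Ee a b c d i l * Ee a b c d j l) =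
        (a * (- c) * (if j' = i then 1 else 0) + a * d * M j' i + b * (- c) * M i j' + b * d * (if i = j' then m else 0))
      + (c * a * (if j' = i then 1 else 0) + c * (- b) * M j' i + d * a * M i j' + d * (- b) * (if i = j' then m else 0))"
        unfolding j'(1) by (rule gen[OF i j'(2)]) (simp_all add: Ee_tl Ee_tr Ee_bl Ee_br i j'(2))
      show ?thesis unfolding e using antiI[OF i j'(2)] i j' by (simp add: algebra_simps)
    qed
  next
    assume "\<exists>i'. i = n + i' \<and> i' < n"
    then obtain i' where i': "i = n + i'" "i' < n" by blast
    from split_idx[OF j] show ?thesis
    proof
      assume j: "j < n"
      have e: "(\<Sum>l<2*n. Ee a b c d i l * Ee a b c d j l) =
        ((- c) * a * (if j = i' then 1 else 0) + (- c) * b * M j i' + d * a * M i' j + d * b * (if i' = j then m else 0))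
      + (a * c * (if j = i' then 1 else 0) + a * d * M j i' + (- b) * c * M i' j + (- b) * d * (if i' = j then m else 0))"
        unfolding i'(1) by (rule gen[OF i'(2) j]) (simp_all add: Ee_tl Ee_tr Ee_bl Ee_br i'(2) j)
      show ?thesis unfolding e using antiI[OF i'(2) j] i' j by (simp add: algebra_simps)
    next
      assume "\<exists>j'. j = n + j' \<and> j' < n"
      then obtain j' where j': "j = n + j'" "j' < n" by blast
      have e: "(\<Sum>l<2*n. Ee a b c d i l * Ee a b c d j l) =
        ((- c) * (- c) * (if j' = i' then 1 else 0) + (- c) * d * M j' i' + d * (- c) * M i' j' + d * d * (if i' = j' then m else 0))
      + (a * a * (if j' = i' then 1 else 0) + a * (- b) * M j' i' + (- b) * a * M i' j' + (- b) * (- b) * (if i' = j' then m else 0))"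
        unfolding i'(1) j'(1) by (rule gen[OF i'(2) j'(2)]) (simp_all add: Ee_bl Ee_br i'(2) j'(2))
      have ij: "(i = j) = (i' = j')" using i' j' by simp
      show ?thesis unfolding e ij using antiI[OF i'(2) j'(2)] M_diag[OF i'(2)]
        by (cases "i' = j'") (simp_all add: algebra_simps power2_eq_square)
    qed
  qed
qed

lemma frame:
  assumes ad: "[a = d] (mod k)" and bc: "[b = c] (mod k)"
  shows "is_frame (2*n) (constrA k (2*n) (range cw))
           (of_int (a^2 + m*b^2 + c^2 + m*d^2) / of_int k) (F_mat k n M a b c d)"
  unfolding is_frame_def
proof (intro conjI allI impI)
  fix i assume "i < 2*n"
  then show "F_mat k n M a b c d i \<in> constrA k (2*n) (range cw)" by (rule row_in[OF ad bc])
next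
  fix i j assume i: "i < 2*n" and j: "j < 2*n"
  show "vinner (2*n) (F_mat k n M a b c d i) (F_mat k n M a b c d j) =
      (if i = j then of_int (a^2 + m*b^2 + c^2 + m*d^2) / of_int k else 0)"
    unfolding F_eq vinner_int Ee_inner[OF i j] by simp
qed

end

theorem proposition3p6:
  fixes k m a b c d :: int and n :: nat and M :: "nat \<Rightarrow> nat \<Rightarrow> int"
  assumes "k \<ge> 2"
    and "\<forall>i<n. \<forall>j<n. M i j \<in> {- (k div 2) .. k div 2}"
    and "\<forall>i<n. \<forall>j<n. M j i = - M i j"
    and "\<forall>i<n. \<forall>j<n. (\<Sum>l<n. M i l * M j l) = (if i = j then m else 0)"
    and "m mod k = (-1) mod k"
    and "a mod k = d mod k" and "b mod k = c mod k"
  shows "self_dual_code k (2*n) (C_k k n M)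
       \<and> unimodular (2*n) (constrA k (2*n) (C_k k n M))
       \<and> is_frame (2*n) (constrA k (2*n) (C_k k n M))
           ((of_int a ^ 2 + of_int m * of_int b ^ 2 + of_int c ^ 2 + of_int m * of_int d ^ 2) / of_int k)
           (F_mat k n M a b c d)"
proof -
  interpret P: P36 k m n M
    by (rule P36.intro[OF assms(1) assms(3) assms(4) assms(5)])
  have ad: "[a = d] (mod k)" using assms(6) by (simp add: cong_def)
  have bc: "[b = c] (mod k)" using assms(7) by (simp add: cong_def)
  have t: "(of_int a ^ 2 + of_int m * of_int b ^ 2 + of_int c ^ 2 + of_int m * of_int d ^ 2) / of_int k
      = (of_int (a^2 + m*b^2 + c^2 + m*d^2) / of_int k :: real)" by simp
  show ?thesis unfolding P.Ck_eq t using P.self_dual P.unimod P.frame[OF ad bc] by blast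
qed

end
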